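(* Let $C>0$ and $\varepsilon>0$, and suppose the angular velocity $v_\theta$ of an axially symmetric velocity field satisfies $|v_\theta(x,t)|\le \dfrac{C}{r\,|\ln r|^{2+\varepsilon}}$ for all $t\ge0$ and all $x$ with $r<1/2$. Then for every $\lambda_1>0$, $v_\theta$ is in the $\lambda_1$ critical class.
   Context: Cylindrical coordinates: $x=(r\cos\theta,r\sin\theta,x_3)$, $r=\sqrt{x_1^2+x_2^2}$. An axially symmetric velocity field has the form $v=v_r(r,x_3,t)e_r+v_\theta(r,x_3,t)e_\theta+v_3(r,x_3,t)e_3$ with $e_r=(x_1/r,x_2/r,0)$, $e_\theta=(-x_2/r,x_1/r,0)$, $e_3=(0,0,1)$. A function $\psi(y,s)$ is axially symmetric in $y$ if it depends on $y$ only through $r$ and $y_3$. For $a>0$, $l\ge a$ let $D_{a,l}=\{(r,\theta,x_3):0\le r<a,\ -l<x_3<l,\ 0\le\theta<2\pi\}$. Definition ($\lambda_1$ critical class): $v_\theta$ is in the $\lambda_1$ critical class if there exist $a\in(0,1)$ and $\lambda_2>0$ such that $$\int_0^t\!\!\int_{\mathbb{R}^3}\Big(\frac{|v_\theta|}{r}+v_\theta^2\Big)\psi^2\,dy\,ds\le \lambda_1\int_0^t\!\!\int_{\mathbb{R}^3}|\nabla\psi|^2\,dy\,ds+\frac{\lambda_2}{a^2}\int_0^t\!\!\int_{\mathbb{R}^3}\psi^2\,dy\,ds$$ for all $t\ge0$ and all smooth $\psi=\psi(y,s)$, $s\in[0,t]$, axially symmetric in $y$ with $\psi(\cdot,s)$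 supported in $D_{a,l}$ for some $l\ge a$. *)

theory Defs
  imports "HOL-Analysis.Analysis"
begin

definition rad :: "real^3 \<Rightarrow> real" where
  "rad y = sqrt ((y$1)^2 + (y$2)^2)"

definition cyl :: "real \<Rightarrow> real \<Rightarrow> (real^3) set" where
  "cyl a l = {y. rad y < a \<and> -l < y$3 \<and> y$3 < l}"

fun Ck :: "nat \<Rightarrow> ('a::euclidean_space \<Rightarrow> real) \<Rightarrow> bool" where
  "Ck 0 f = continuous_on UNIV f"
| "Ck (Suc k) f = (f differentiable_on UNIV \<and> continuous_on UNIV f \<and>
      (\<forall>i\<in>Basis. Ck k (\<lambda>x. frechet_derivative f (at x) i)))"

definition smooth_fun :: "('a::euclidean_space \<Rightarrow> real) \<Rightarrow> bool" where
  "smooth_fun f = (\<forall>k. Ck k f)"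

definition grad_y :: "(real^3 \<Rightarrow> real \<Rightarrow> real) \<Rightarrow> real^3 \<Rightarrow> real \<Rightarrow> real^3" where
  "grad_y \<psi> y s = (\<chi> i. frechet_derivative (\<lambda>z. \<psi> z s) (at y) (axis i 1))"

definition axisym :: "(real^3 \<Rightarrow> real \<Rightarrow> real) \<Rightarrow> bool" where
  "axisym \<psi> = (\<forall>y z s. rad y = rad z \<and> y$3 = z$3 \<longrightarrow> \<psi> y s = \<psi> z s)"

definition admissible :: "real \<Rightarrow> real \<Rightarrow> (real^3 \<Rightarrow> real \<Rightarrow> real) \<Rightarrow> bool" where
  "admissible a t \<psi> = (smooth_fun (\<lambda>p::(real^3) \<times> real. \<psi> (fst p) (snd p)) \<and> axisym \<psi> \<and>
     (\<exists>l\<ge>a. \<forall>s\<in>{0..t}. closure {y. \<psi> y s \<noteq> 0} \<subseteq> cyl a l))"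

text \<open>The lambda_1 critical class; vth r x3 t is the angular velocity v_theta.
  Integrals of nonnegative functions are nonnegative Lebesgue integrals (values in ennreal).\<close>
definition critical_class :: "real \<Rightarrow> (real \<Rightarrow> real \<Rightarrow> real \<Rightarrow> real) \<Rightarrow> bool" where
  "critical_class lam1 vth = (\<exists>a lam2. 0 < a \<and> a < 1 \<and> 0 < lam2 \<and>
     (\<forall>t\<ge>0. \<forall>\<psi>. admissible a t \<psi> \<longrightarrow>
        (\<integral>\<^sup>+ s\<in>{0..t}. (\<integral>\<^sup>+ y. ennreal ((\<bar>vth (rad y) (y$3) s\<bar> / rad y + (vth (rad y) (y$3) s)^2) * (\<psi> y s)^2) \<partial>lborel) \<partial>lborel)
        \<le> ennreal lam1 * (\<integral>\<^sup>+ s\<in>{0..t}. (\<integral>\<^sup>+ y. ennreal ((norm (grad_y \<psi> y s))^2) \<partial>lborel) \<partial>lborel)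
          + ennreal (lam2 / a^2) * (\<integral>\<^sup>+ s\<in>{0..t}. (\<integral>\<^sup>+ y. ennreal ((\<psi> y s)^2) \<partial>lborel) \<partial>lborel)))"

end

theory Submission
  imports Defs
begin

lemma hpow_deriv:
  fixes q x :: real
  assumes "0 < x" "x < 1"
  shows "((\<lambda>x. (-ln x) powr q) has_real_derivative (q * (-ln x) powr (q - 1) * (-1/x))) (at x)"
proof -
  have d: "((\<lambda>x. - ln x) has_real_derivative (-1/x)) (at x)"
    using assms by (auto intro!: derivative_eq_intros)
  have "-ln x > 0" using assms by simp
  from DERIV_powr[OF d this DERIV_const[of q]] show ?thesis
    using assms by (simp add: field_simps powr_diff)
qed

lemma hpow_lim0:
  fixes q :: real assumes "q < 0"
  shows "((\<lambda>x. (-ln x) powr q) \<longlongrightarrow> 0) (at_right 0)"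
proof (rule tendsto_neg_powr[OF assms])
  show "filterlim (\<lambda>x. - ln x) at_top (at_right (0::real))"
    using ln_at_0 by (simp add: filterlim_uminus_at_top)
qed

lemma hpow_cont:
  fixes q a :: real assumes "q < 0" "0 < a" "a < 1"
  shows "continuous_on {0..a} (\<lambda>x. if x \<le> 0 then 0 else (-ln x) powr q)"
proof -
  have "continuous (at x within {0..a}) (\<lambda>x. if x \<le> 0 then 0 else (-ln x) powr q)"
    if x: "x \<in> {0..a}" for x
  proof (cases "x = 0")
    case True
    have "((\<lambda>x. if x \<le> 0 then 0 else (-ln x) powr q) \<longlongrightarrow> 0) (at 0 within {0..a})"
    proof -
      have "((\<lambda>x. (-ln x) powr q) \<longlongrightarrow> 0) (at 0 within {0<..})"
        using hpow_lim0[OF assms(1)] by simp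
      then have "((\<lambda>x. if x \<le> 0 then 0 else (-ln x) powr q) \<longlongrightarrow> 0) (at 0 within {0<..})"
        by (rule Lim_transform_within[where d=1]) auto
      then have "((\<lambda>x. if x \<le> 0 then 0 else (-ln x) powr q) \<longlongrightarrow> 0) (at 0 within {0<..a})"
        by (rule tendsto_within_subset) auto
      moreover have "at 0 within {0..a} = at 0 within {0<..a}"
        by (rule at_within_nhd[where S=UNIV]) auto
      ultimately show ?thesis by simp
    qed
    then show ?thesis using True by (simp add: continuous_within)
  next
    case False
    with x have x0: "0 < x" "x < 1" using assms by auto
    have "isCont (\<lambda>x. (-ln x) powr q) x"
      using hpow_deriv[OF x0] by (rule DERIV_isCont)
    moreover have "\<forall>\<^sub>F y in nhds x. (\<lambda>x. (-ln x) powr q) y = (\<lambda>x. if x \<le> 0 then 0 else (-ln x) powr q) y"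
      using eventually_nhds_in_open[of "{0<..}" x] x0 by (auto elim!: eventually_mono)
    ultimately have "isCont (\<lambda>x. if x \<le> 0 then 0 else (-ln x) powr q) x"
      using isCont_cong[of "\<lambda>x. (-ln x) powr q" "\<lambda>x. if x \<le> 0 then 0 else (-ln x) powr q" x] by simp
    then show ?thesis by (rule continuous_at_imp_continuous_within)
  qed
  then show ?thesis by (simp add: continuous_on_eq_continuous_within)
qed

lemma amgm_aux:
  fixes X Y c :: real assumes "0 < c"
  shows "-(2*X*Y) \<le> X^2*c/2 + 2*Y^2/c"
proof -
  have "X^2*c/2 + 2*Y^2/c + 2*X*Y = (X*c + 2*Y)^2/(2*c)"
    using assms by (simp add: field_simps power2_eq_square)
  moreover have "(X*c + 2*Y)^2/(2*c) \<ge> 0" using assms by simp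
  ultimately show ?thesis by linarith
qed

lemma hardy1d:
  fixes g g' :: "real \<Rightarrow> real" and a m :: real
  assumes a0: "0 < a" and a1: "a < 1" and m: "0 < m"
    and der: "\<And>x. 0 \<le> x \<Longrightarrow> x \<le> a \<Longrightarrow> (g has_real_derivative g' x) (at x)"
    and cont: "continuous_on {0..a} g'" and ga: "g a = 0"
  shows "(\<integral>\<^sup>+\<rho>. ennreal ((g \<rho>)^2 * (-ln \<rho>) powr (-(2+m)) / \<rho>) * indicator {0..a} \<rho> \<partial>lborel)
         \<le> 4 * (\<integral>\<^sup>+\<rho>. ennreal ((g' \<rho>)^2 * \<rho> * (-ln \<rho>) powr (-m)) * indicator {0..a} \<rho> \<partial>lborel)"
proof -
  define h where "h = (\<lambda>x::real. if x \<le> 0 then 0 else (-ln x) powr (-(1+m)))"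
  define hd where "hd = (\<lambda>x::real. (1+m) * ((-ln x) powr (-(2+m)) / x))"
  define H where "H = (\<lambda>x::real. if x \<le> 0 then 0 else (-ln x) powr (-m))"
  have hc: "continuous_on {0..a} h" unfolding h_def
    using hpow_cont[of "-(1+m)" a] m a0 a1 by simp
  have Hc: "continuous_on {0..a} H" unfolding H_def
    using hpow_cont[of "-m" a] m a0 a1 by simp
  have gc: "continuous_on {0..a} g"
    using der by (auto simp: continuous_on_eq_continuous_within intro!: continuous_at_imp_continuous_within DERIV_isCont)
  have hder: "(h has_real_derivative hd x) (at x)" if x: "0 < x" "x < 1" for x
  proof -
    have e: "-(1+m)-1 = -(2+m)" by simp
    have d: "((\<lambda>x. (-ln x) powr (-(1+m))) has_real_derivative ((-(1+m)) * (-ln x) powr (-(2+m)) * (-1/x))) (at x)"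
      using hpow_deriv[OF x, of "-(1+m)"] unfolding e .
    have eq: "(-(1+m)) * (-ln x) powr (-(2+m)) * (-1/x) = hd x"
      unfolding hd_def using x by (simp add: field_simps)
    have "((\<lambda>x. (-ln x) powr (-(1+m))) has_real_derivative hd x) (at x)"
      using d unfolding eq .
    then show ?thesis
      by (rule has_field_derivative_transform_within_open[where S="{0<..}"]) (use x in \<open>auto simp: h_def\<close>)
  qed
  define F where "F = (\<lambda>x. (g x)^2 * h x)"
  have ftc: "((\<lambda>x. 2 * g x * g' x * h x + (g x)^2 * hd x) has_integral (F a - F 0)) {0..a}"
  proof (rule fundamental_theorem_of_calculus_interior)
    show "continuous_on {0..a} F" unfolding F_def using gc hc by (intro continuous_intros)
    fix x assume x: "x \<in> {0<..<a}"
    have "(F has_real_derivative (2 * g x * g' x * h x + (g x)^2 * hd x)) (at x)"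
      unfolding F_def using x a1
      by (auto intro!: derivative_eq_intros der hder simp: field_simps power2_eq_square)
    then show "(F has_vector_derivative (2 * g x * g' x * h x + (g x)^2 * hd x)) (at x)"
      by (simp add: has_real_derivative_iff_has_vector_derivative)
  qed (use a0 in auto)
  have F0: "F a - F 0 = 0" by (simp add: F_def h_def ga)
  define u where "u = (\<lambda>x. 2 * g x * g' x * h x)"
  have uc: "continuous_on {0..a} u" unfolding u_def using gc hc cont by (intro continuous_intros)
  then obtain U where uU: "(u has_integral U) {0..a}"
    using integrable_continuous_interval by blast
  define I where "I = - U"
  have vI: "((\<lambda>x. (g x)^2 * hd x) has_integral I) {0..a}"
    using has_integral_diff[OF ftc uU] unfolding F0 I_def u_def by simp
  define j where "j = (\<lambda>x. (g' x)^2 * x * (-ln x) powr (-m))"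
  have jc: "continuous_on {0..a} j"
  proof -
    have "continuous_on {0..a} (\<lambda>x. (g' x)^2 * x * H x)" using cont Hc by (intro continuous_intros)
    then show ?thesis by (rule continuous_on_cong[THEN iffD1, rotated 2]) (auto simp: j_def H_def)
  qed
  then obtain J where jJ: "(j has_integral J) {0..a}"
    using integrable_continuous_interval by blast
  have j0: "0 \<le> j x" if "x \<in> {0..a}" for x using that by (simp add: j_def)
  have J0: "0 \<le> J" using has_integral_nonneg[OF jJ j0] by simp
  have pw: "- u x \<le> (1/2) * ((g x)^2 * hd x) + (2/(1+m)) * j x" if x: "x \<in> {0..a}" for x
  proof (cases "x = 0")
    case True then show ?thesis by (simp add: u_def h_def hd_def j_def)
  next
    case False
    with x a1 have x0: "0 < x" "x < 1" by auto
    define L where "L = - ln x"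
    have L0: "0 < L" using x0 by (simp add: L_def)
    define A where "A = L powr (-(2+m))"
    define B where "B = L powr (-m)"
    have A0: "0 < A" using L0 by (simp add: A_def)
    have hx: "h x = L powr (-(1+m))" using x0 by (simp add: h_def L_def)
    have hsq: "(h x)^2 = A * B" unfolding hx A_def B_def power2_eq_square powr_add[symmetric]
      by (rule arg_cong[where f="\<lambda>e. L powr e"]) (simp add: algebra_simps)
    define c where "c = (1+m) * A / x"
    have c0: "0 < c" using A0 m x0 by (simp add: c_def)
    have "-(2 * g x * (g' x * h x)) \<le> (g x)^2 * c / 2 + 2 * (g' x * h x)^2 / c"
      by (rule amgm_aux[OF c0])
    also have "(g x)^2 * c / 2 = (1/2) * ((g x)^2 * hd x)"
      by (simp add: c_def hd_def A_def L_def)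
    also have "2 * (g' x * h x)^2 / c = (2/(1+m)) * j x"
    proof -
      have Am: "A + A*m > 0" using A0 m by (simp add: add_pos_nonneg)
      show ?thesis
      unfolding power_mult_distrib hsq c_def j_def using A0 m x0 Am
      by (simp add: B_def L_def field_simps)
    qed
    finally show ?thesis by (simp add: u_def mult.assoc)
  qed
  have "-U \<le> (1/2) * I + (2/(1+m)) * J"
    using has_integral_le[OF has_integral_neg[OF uU]
        has_integral_add[OF has_integral_cmul[OF vI, of "1/2"] has_integral_cmul[OF jJ, of "2/(1+m)"]]]
      pw by simp
  then have IJ: "I \<le> (4/(1+m)) * J" unfolding I_def by simp
  define K where "K = (\<lambda>x. (g x)^2 * (-ln x) powr (-(2+m)) / x)"
  have KI: "(K has_integral (I/(1+m))) {0..a}"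
  proof -
    have "((\<lambda>x. (1/(1+m)) * ((g x)^2 * hd x)) has_integral ((1/(1+m)) * I)) {0..a}"
      by (rule has_integral_cmul[OF vI, simplified])
    moreover have "(\<lambda>x. (1/(1+m)) * ((g x)^2 * hd x)) = K"
      using m by (auto simp: K_def hd_def fun_eq_iff)
    ultimately show ?thesis by simp
  qed
  have K0: "0 \<le> K x" if "x \<in> {0..a}" for x using that by (simp add: K_def)
  have e1: "(\<integral>\<^sup>+\<rho>. ennreal (K \<rho>) * indicator {0..a} \<rho> \<partial>lborel) = ennreal (I/(1+m))"
    by (rule nn_integral_has_integral_lebesgue'[OF K0 KI])
  have e2: "(\<integral>\<^sup>+\<rho>. ennreal (j \<rho>) * indicator {0..a} \<rho> \<partial>lborel) = ennreal J"
    by (rule nn_integral_has_integral_lebesgue'[OF j0 jJ])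
  have "I/(1+m) \<le> 4 * J"
  proof -
    have "I/(1+m) \<le> (4/(1+m)) * J / (1+m)" using IJ m by (intro divide_right_mono) auto
    also have "\<dots> = 4 * J / (1+m)^2" by (simp add: power2_eq_square)
    also have "\<dots> \<le> 4 * J"
    proof -
      have "(1::real) \<le> (1+m)^2" using m by (simp add: power2_eq_square algebra_simps)
      then show ?thesis using J0 by (simp add: divide_le_eq mult_le_cancel_left1 algebra_simps)
    qed
    finally show ?thesis .
  qed
  then have "ennreal (I/(1+m)) \<le> 4 * ennreal J"
  proof -
    have "4 * ennreal J = ennreal (4 * J)" using J0 by (simp add: ennreal_mult)
    then show ?thesis using \<open>I/(1+m) \<le> 4 * J\<close> by (simp add: ennreal_leI)
  qed
  then show ?thesis using e1 e2 unfolding K_def j_def by simp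
qed

lemma int_2pi_rho:
  fixes x :: real assumes "0 \<le> x"
  shows "(\<integral>\<^sup>+\<rho>. ennreal (2*pi*\<rho>) * indicator {..<x} \<rho> \<partial>lborel) = ennreal (pi * x^2)"
proof -
  have "((\<lambda>\<rho>. 2*pi*\<rho>) has_integral (pi * x^2 - pi * 0^2)) {0..x}"
  proof (rule fundamental_theorem_of_calculus[OF assms])
    fix y assume "y \<in> {0..x}"
    have "((\<lambda>\<rho>. pi * \<rho>^2) has_real_derivative (2*pi*y)) (at y within {0..x})"
      by (auto intro!: derivative_eq_intros)
    then show "((\<lambda>\<rho>. pi * \<rho>^2) has_vector_derivative (2*pi*y)) (at y within {0..x})"
      by (simp add: has_real_derivative_iff_has_vector_derivative)
  qed
  then have I: "((\<lambda>\<rho>. 2*pi*\<rho>) has_integral (pi * x^2)) {0..x}" by simp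
  have "(\<integral>\<^sup>+\<rho>. ennreal (2*pi*\<rho>) * indicator {..<x} \<rho> \<partial>lborel)
      = (\<integral>\<^sup>+\<rho>. ennreal (2*pi*\<rho>) * indicator {0..x} \<rho> \<partial>lborel)"
  proof (rule nn_integral_cong_AE)
    show "AE \<rho> in lborel. ennreal (2*pi*\<rho>) * indicator {..<x} \<rho> = ennreal (2*pi*\<rho>) * indicator {0..x} \<rho>"
      using AE_lborel_singleton[of x]
    proof eventually_elim
      case (elim \<rho>)
      have "\<rho> < 0 \<Longrightarrow> ennreal (2*pi*\<rho>) = 0"
        by (intro ennreal_neg) (simp add: mult_nonneg_nonpos)
      then show ?case using elim
        by (cases "\<rho> < 0") (auto simp: indicator_def)
    qed
  qed
  also have "\<dots> = ennreal (pi * x^2)"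
    by (rule nn_integral_has_integral_lebesgue'[OF _ I]) auto
  finally show ?thesis .
qed

lemma radial2:
  "distr (lborel :: (real\<times>real) measure) borel norm = density lborel (\<lambda>\<rho>. ennreal (2*pi*\<rho>))"
proof (rule measure_eqI_generator_eq_countable[where E="range lessThan" and A="lessThan ` \<rat>" and \<Omega>=UNIV])
  show "Int_stable (range lessThan :: real set set)"
  proof (unfold Int_stable_def, safe)
    fix a b :: real
    have "{..<a} \<inter> {..<b} = {..<min a b}" by auto
    then show "{..<a} \<inter> {..<b} \<in> range lessThan" by (metis rangeI)
  qed
  show "range lessThan \<subseteq> Pow (UNIV :: real set)" by auto
  have "sets (borel :: real measure) = sigma_sets UNIV (range lessThan)"
    by (subst borel_Iio) simp
  then show "sets (distr (lborel :: (real\<times>real) measure) borel norm) = sigma_sets UNIV (range lessThan)"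
    "sets (density lborel (\<lambda>\<rho>. ennreal (2*pi*\<rho>))) = sigma_sets UNIV (range lessThan)"
    by auto
  show "lessThan ` \<rat> \<subseteq> range lessThan" by auto
  show "\<Union> (lessThan ` \<rat>) = (UNIV :: real set)"
    using Rats_no_top_le by (auto) (meson Rats_dense_in_real gt_ex less_trans)
  show "countable (lessThan ` (\<rat> :: real set))" using countable_rat by blast
  have em: "emeasure (distr (lborel :: (real\<times>real) measure) borel norm) {..<x} = ennreal (pi * (max x 0)^2)" for x :: real
  proof -
    have "emeasure (distr (lborel :: (real\<times>real) measure) borel norm) {..<x} = emeasure lborel (ball (0::real\<times>real) (max x 0))"
    proof -
      have "norm -` {..<x} \<inter> space lborel = ball (0::real\<times>real) (max x 0)"
        by (auto simp: ball_def max_def split: if_splits) (metis norm_ge_zero order_le_less_trans order_less_le_trans less_irrefl)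
      then show ?thesis by (subst emeasure_distr) auto
    qed
    also have "\<dots> = ennreal (pi * (max x 0)^2)"
      by (subst emeasure_ball) (auto simp: unit_ball_vol_2 power2_eq_square)
    finally show ?thesis .
  qed
  show "emeasure (distr (lborel :: (real\<times>real) measure) borel norm) a \<noteq> \<infinity>" if "a \<in> lessThan ` \<rat>" for a
    using that em by auto
  fix X assume "X \<in> range (lessThan :: real \<Rightarrow> real set)"
  then obtain x where X: "X = {..<x}" by auto
  show "emeasure (distr (lborel :: (real\<times>real) measure) borel norm) X = emeasure (density lborel (\<lambda>\<rho>. ennreal (2*pi*\<rho>))) X"
  proof (cases "0 \<le> x")
    case True
    then show ?thesis unfolding X em
      by (subst emeasure_density) (auto simp: int_2pi_rho)
  next
    case False
    have "(\<integral>\<^sup>+\<rho>. ennreal (2*pi*\<rho>) * indicator {..<x} \<rho> \<partial>lborel) = 0"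
    proof -
      have "\<And>\<rho>. ennreal (2*pi*\<rho>) * indicator {..<x} \<rho> = 0"
        using False by (auto simp: indicator_def mult_nonneg_nonpos intro!: ennreal_neg)
      then show ?thesis by (subst nn_integral_0_iff_AE) auto
    qed
    then show ?thesis unfolding X em using False
      by (subst emeasure_density) (auto simp: max_def)
  qed
qed

definition T3 :: "real^3 \<Rightarrow> (real\<times>real)\<times>real" where
  "T3 y = ((y$1, y$2), y$3)"

definition Ti3 :: "(real\<times>real)\<times>real \<Rightarrow> real^3" where
  "Ti3 p = vector [fst (fst p), snd (fst p), snd p]"

lemma T3_meas[measurable]: "T3 \<in> borel_measurable borel"
  unfolding T3_def by (intro borel_measurable_continuous_onI continuous_intros)

lemma Ti3_cont: "continuous_on UNIV Ti3"
proof -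
  have eq: "Ti3 = (\<lambda>p. (\<chi> i. if i = 1 then fst (fst p) else if i = 2 then snd (fst p) else snd p))"
    by (auto simp: Ti3_def fun_eq_iff vec_eq_iff forall_3 vector_3)
  show ?thesis unfolding eq
  proof (rule continuous_on_vec_lambda)
    fix i :: 3
    show "continuous_on UNIV (\<lambda>p::(real\<times>real)\<times>real. if i = 1 then fst (fst p) else if i = 2 then snd (fst p) else snd p)"
      by (cases "i = 1"; cases "i = 2") (auto intro!: continuous_intros)
  qed
qed

lemma Ti3_meas[measurable]: "Ti3 \<in> borel_measurable borel"
  using Ti3_cont by (rule borel_measurable_continuous_onI)

lemma Ti3_T3[simp]: "Ti3 (T3 y) = y"
  by (auto simp: Ti3_def T3_def vec_eq_iff forall_3 vector_3)

lemma mem_box3: "(x::real^3) \<in> box (vector [l1,l2,l3]) (vector [u1,u2,u3]) \<longleftrightarrow>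
    l1 < x$1 \<and> x$1 < u1 \<and> l2 < x$2 \<and> x$2 < u2 \<and> l3 < x$3 \<and> x$3 < u3"
  unfolding mem_box_cart by (auto simp: forall_3 vector_3)

lemma Basis_3prod: "(Basis :: ((real\<times>real)\<times>real) set) = {((1,0),0), ((0,1),0), ((0,0),1)}"
  by (auto simp: Basis_prod_def zero_prod_def)

lemma prod_Basis_3prod: "(\<Prod>b\<in>(Basis :: ((real\<times>real)\<times>real) set). f b) = f ((1,0),0) * f ((0,1),0) * f ((0,0),1)"
  unfolding Basis_3prod by (simp add: mult.assoc)

lemma t1: "(\<Prod>b\<in>Basis. (((u1,u2),u3) - ((l1,l2),l3) :: (real\<times>real)\<times>real) \<bullet> b) = (u1-l1)*(u2-l2)*(u3-l3)"
  unfolding prod_Basis_3prod by simp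

lemma Basis_vec3: "(Basis :: (real^3) set) = {axis 1 1, axis 2 1, axis 3 1}"
  by (auto simp: Basis_vec_def UNIV_3)

lemma t2: "(\<Prod>b\<in>Basis. ((vector [u1,u2,u3] :: real^3) - vector [l1,l2,l3]) \<bullet> b) = (u1-l1)*(u2-l2)*(u3-l3)"
proof -
  have d: "axis 1 (1::real) \<noteq> (axis 2 1 :: real^3)" "axis 1 (1::real) \<noteq> (axis 3 1 :: real^3)" "axis 2 (1::real) \<noteq> (axis 3 1 :: real^3)"
    by (auto simp: axis_eq_axis)
  have "(\<Prod>b\<in>Basis. ((vector [u1,u2,u3] :: real^3) - vector [l1,l2,l3]) \<bullet> b)
     = (((vector [u1,u2,u3] :: real^3) - vector [l1,l2,l3]) \<bullet> axis 1 1) * ((((vector [u1,u2,u3] :: real^3) - vector [l1,l2,l3]) \<bullet> axis 2 1) *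
       (((vector [u1,u2,u3] :: real^3) - vector [l1,l2,l3]) \<bullet> axis 3 1))"
    unfolding Basis_vec3 using d by simp
  also have "\<dots> = (u1-l1)*(u2-l2)*(u3-l3)"
    unfolding cart_eq_inner_axis[symmetric] by (simp add: vector_3)
  finally show ?thesis .
qed


lemma box_prod_eq: "box (a,b) (c,d) = box a c \<times> box b d"
  by (auto simp: Basis_prod_def ball_Un box_def)

lemma T3_lborel: "distr lborel borel T3 = lborel"
proof -
  have "lborel = distr lborel borel T3"
  proof (rule lborel_eqI)
    fix l u :: "(real\<times>real)\<times>real"
    assume le: "\<And>b. b \<in> Basis \<Longrightarrow> l \<bullet> b \<le> u \<bullet> b"
    obtain l1 l2 l3 where l: "l = ((l1,l2),l3)" by (metis prod.collapse)
    obtain u1 u2 u3 where u: "u = ((u1,u2),u3)" by (metis prod.collapse)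
    have le': "l1 \<le> u1" "l2 \<le> u2" "l3 \<le> u3"
      using le[of "((1,0),0)"] le[of "((0,1),0)"] le[of "((0,0),1)"]
      by (auto simp: l u Basis_prod_def zero_prod_def)
    have pre: "T3 -` box l u = box (vector [l1,l2,l3]) (vector [u1,u2,u3])"
      unfolding set_eq_iff vimage_eq mem_box3 by (auto simp: T3_def l u box_prod_eq)
    have ne: "\<forall>i\<in>Basis. (vector [l1,l2,l3] :: real^3) \<bullet> i \<le> (vector [u1,u2,u3] :: real^3) \<bullet> i"
    proof
      fix i :: "real^3" assume "i \<in> Basis"
      then obtain k where k: "i = axis k 1" by (auto simp: Basis_vec_def)
      have "k = 1 \<or> k = 2 \<or> k = 3" by (rule exhaust_3)
      then show "(vector [l1,l2,l3] :: real^3) \<bullet> i \<le> (vector [u1,u2,u3] :: real^3) \<bullet> i"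
        using le' unfolding k cart_eq_inner_axis[symmetric] by (auto simp: vector_3)
    qed
    then have "emeasure lborel (box (vector [l1,l2,l3]) (vector [u1,u2,u3]) :: (real^3) set)
          = ennreal ((u1-l1)*(u2-l2)*(u3-l3))"
      using emeasure_lborel_box[of "vector [l1,l2,l3] :: real^3" "vector [u1,u2,u3]"] t2 by simp
    moreover have "(\<Prod>b\<in>Basis. (u - l) \<bullet> b) = (u1-l1)*(u2-l2)*(u3-l3)"
      unfolding l u by (rule t1)
    ultimately show "emeasure (distr lborel borel T3) (box l u) = (\<Prod>b\<in>Basis. (u - l) \<bullet> b)"
      by (subst emeasure_distr) (simp_all add: pre)
  qed simp
  then show ?thesis ..
qed

lemma nn_int_R3:
  fixes f :: "real^3 \<Rightarrow> ennreal"
  assumes [measurable]: "f \<in> borel_measurable borel"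
  shows "(\<integral>\<^sup>+y. f y \<partial>lborel) = (\<integral>\<^sup>+z. (\<integral>\<^sup>+q. f (Ti3 (q,z)) \<partial>lborel) \<partial>lborel)"
proof -
  have "(\<integral>\<^sup>+y. f y \<partial>lborel) = (\<integral>\<^sup>+y. f (Ti3 (T3 y)) \<partial>lborel)" by simp
  also have "\<dots> = (\<integral>\<^sup>+p. f (Ti3 p) \<partial>distr lborel borel T3)"
    by (subst nn_integral_distr) auto
  also have "\<dots> = (\<integral>\<^sup>+p. f (Ti3 p) \<partial>(lborel \<Otimes>\<^sub>M lborel))"
    by (simp add: T3_lborel lborel_prod)
  also have "\<dots> = (\<integral>\<^sup>+z. (\<integral>\<^sup>+q. f (Ti3 (q,z)) \<partial>lborel) \<partial>lborel)"
  proof (rule lborel_pair.nn_integral_snd[symmetric])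
    show "(\<lambda>p. f (Ti3 p)) \<in> borel_measurable (lborel \<Otimes>\<^sub>M lborel)"
      by (simp add: lborel_prod)
  qed
  finally show ?thesis .
qed

lemma rad_cont: "continuous_on UNIV rad"
  unfolding rad_def by (intro continuous_intros)

lemma radz_meas[measurable]: "(\<lambda>y::real^3. (rad y, y$3)) \<in> borel_measurable borel"
  by (intro borel_measurable_continuous_onI continuous_intros rad_cont)

lemma radial3:
  fixes F :: "real \<Rightarrow> real \<Rightarrow> ennreal"
  assumes Fm: "(\<lambda>p. F (fst p) (snd p)) \<in> borel_measurable borel"
  shows "(\<integral>\<^sup>+y. F (rad y) (y$3) \<partial>lborel) = (\<integral>\<^sup>+z. (\<integral>\<^sup>+\<rho>. ennreal (2*pi*\<rho>) * F \<rho> z \<partial>lborel) \<partial>lborel)"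
proof -
  have m: "(\<lambda>y. F (rad y) (y$3)) \<in> borel_measurable borel"
    using measurable_comp[OF radz_meas Fm] by (simp add: comp_def)
  have mz: "(\<lambda>\<rho>. F \<rho> z) \<in> borel_measurable borel" for z
    using measurable_comp[OF _ Fm, of "\<lambda>\<rho>. (\<rho>, z)"] by (simp add: comp_def)
  have "(\<integral>\<^sup>+y. F (rad y) (y$3) \<partial>lborel) = (\<integral>\<^sup>+z. (\<integral>\<^sup>+q. F (rad (Ti3 (q,z))) ((Ti3 (q,z))$3) \<partial>lborel) \<partial>lborel)"
    by (rule nn_int_R3[OF m])
  also have "\<dots> = (\<integral>\<^sup>+z. (\<integral>\<^sup>+q. F (norm (q::real\<times>real)) z \<partial>lborel) \<partial>lborel)"
  proof -
    have "rad (Ti3 (q,z)) = norm q" "(Ti3 (q,z))$3 = z" for q z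
      by (cases q; simp add: rad_def Ti3_def vector_3 norm_Pair power2_abs)+
    then show ?thesis by simp
  qed
  also have "\<dots> = (\<integral>\<^sup>+z. (\<integral>\<^sup>+\<rho>. F \<rho> z \<partial>distr (lborel :: (real\<times>real) measure) borel norm) \<partial>lborel)"
    using mz by (subst nn_integral_distr) auto
  also have "\<dots> = (\<integral>\<^sup>+z. (\<integral>\<^sup>+\<rho>. ennreal (2*pi*\<rho>) * F \<rho> z \<partial>lborel) \<partial>lborel)"
    unfolding radial2 using mz by (subst nn_integral_density) auto
  finally show ?thesis .
qed

lemma line_deriv:
  fixes \<phi> :: "real^3 \<Rightarrow> real"
  assumes "\<phi> differentiable (at (t *\<^sub>R e + c))"
  shows "((\<lambda>t. \<phi> (t *\<^sub>R e + c)) has_real_derivative frechet_derivative \<phi> (at (t *\<^sub>R e + c)) e) (at t)"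
proof -
  let ?D = "frechet_derivative \<phi> (at (t *\<^sub>R e + c))"
  have d: "(\<phi> has_derivative ?D) (at (t *\<^sub>R e + c))"
    using assms frechet_derivative_works by blast
  have l: "((\<lambda>t. t *\<^sub>R e + c) has_derivative (\<lambda>h. h *\<^sub>R e)) (at t)"
    by (auto intro!: derivative_eq_intros)
  have "((\<phi> \<circ> (\<lambda>t. t *\<^sub>R e + c)) has_derivative (?D \<circ> (\<lambda>h. h *\<^sub>R e))) (at t)"
    by (rule diff_chain_at[OF l]) (use d in simp)
  moreover have "?D \<circ> (\<lambda>h. h *\<^sub>R e) = (*) (?D e)"
    using has_derivative_linear[OF d] by (auto simp: fun_eq_iff linear_cmul)
  ultimately show ?thesis
    by (simp add: has_field_derivative_def comp_def)
qed

lemma vec3_line: "t *\<^sub>R axis 1 1 + vector [0, 0, z] = (vector [t, 0, z] :: real^3)"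
  by (auto simp: vec_eq_iff forall_3 vector_3 axis_def)

lemma rad_vec3: "rad (vector [t, 0, z]) = \<bar>t\<bar>"
  by (simp add: rad_def vector_3)

lemma frechet_inner:
  fixes \<phi> :: "real^3 \<Rightarrow> real"
  assumes "\<phi> differentiable (at y)"
  shows "frechet_derivative \<phi> (at y) e = e \<bullet> (\<chi> i. frechet_derivative \<phi> (at y) (axis i 1))"
proof -
  have lin: "linear (frechet_derivative \<phi> (at y))"
    using assms by (rule linear_frechet_derivative)
  have "e = e$1 *\<^sub>R axis 1 1 + e$2 *\<^sub>R axis 2 1 + e$3 *\<^sub>R axis 3 1"
    by (auto simp: vec_eq_iff forall_3 axis_def)
  then have "frechet_derivative \<phi> (at y) e = frechet_derivative \<phi> (at y) (e$1 *\<^sub>R axis 1 1 + e$2 *\<^sub>R axis 2 1 + e$3 *\<^sub>R axis 3 1)"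
    by simp
  also have "\<dots> = e$1 * frechet_derivative \<phi> (at y) (axis 1 1) + e$2 * frechet_derivative \<phi> (at y) (axis 2 1)
      + e$3 * frechet_derivative \<phi> (at y) (axis 3 1)"
    using lin by (simp add: linear_add linear_cmul)
  also have "\<dots> = e \<bullet> (\<chi> i. frechet_derivative \<phi> (at y) (axis i 1))"
    by (simp add: inner_vec_def sum_3)
  finally show ?thesis .
qed

lemma radial_deriv_bound:
  fixes \<phi> :: "real^3 \<Rightarrow> real"
  assumes diff: "\<And>y. \<phi> differentiable (at y)"
    and axi: "\<And>y z. rad y = rad z \<Longrightarrow> y$3 = z$3 \<Longrightarrow> \<phi> y = \<phi> z"
    and r: "0 < rad y"
  shows "\<bar>frechet_derivative \<phi> (at (vector [rad y, 0, y$3])) (axis 1 1)\<bar>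
         \<le> norm (\<chi> i. frechet_derivative \<phi> (at y) (axis i 1))"
proof -
  define r where "r = rad y"
  define e :: "real^3" where "e = vector [y$1/r, y$2/r, 0]"
  define c :: "real^3" where "c = vector [0, 0, y$3]"
  have r0: "0 < r" using r by (simp add: r_def)
  have rsq: "(y$1)^2 + (y$2)^2 = r^2" using r by (simp add: r_def rad_def)
  have ye: "r *\<^sub>R e + c = y" using r0
    by (auto simp: vec_eq_iff forall_3 vector_3 e_def c_def)
  have ne: "norm e = 1"
  proof -
    have "(norm e)^2 = ((y$1)^2 + (y$2)^2) / r^2"
      by (simp add: e_def norm_vec_def L2_set_def sum_3 vector_3 power_divide add_divide_distrib)
    also have "\<dots> = 1" using rsq r0 by simp
    finally show ?thesis using norm_ge_zero[of e] by (auto simp: power2_eq_1_iff)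
  qed
  have radl: "rad (t *\<^sub>R e + c) = t" if "0 < t" for t
  proof -
    have "rad (t *\<^sub>R e + c) = sqrt (t^2 * (((y$1)^2 + (y$2)^2) / r^2))"
      by (simp add: rad_def e_def c_def vector_3 power_divide power_mult_distrib add_divide_distrib algebra_simps)
    also have "\<dots> = t" using rsq r0 that by simp
    finally show ?thesis .
  qed
  have eqG: "\<phi> (t *\<^sub>R axis 1 1 + vector [0, 0, y$3]) = \<phi> (t *\<^sub>R e + c)" if "0 < t" for t
  proof -
    have z: "(t *\<^sub>R e + c)$3 = y$3" by (simp add: e_def c_def vector_3)
    show ?thesis unfolding vec3_line by (rule axi) (use that z in \<open>simp_all add: rad_vec3 radl vector_3\<close>)
  qed
  have d1: "((\<lambda>t. \<phi> (t *\<^sub>R axis 1 1 + vector [0, 0, y$3])) has_real_derivative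
      frechet_derivative \<phi> (at (vector [r, 0, y$3])) (axis 1 1)) (at r)"
    using line_deriv[where t=r and e="axis 1 1" and c="vector [0,0,y$3]", OF diff] unfolding vec3_line .
  have d2: "((\<lambda>t. \<phi> (t *\<^sub>R e + c)) has_real_derivative frechet_derivative \<phi> (at y) e) (at r)"
    using line_deriv[where t=r and e=e and c=c, OF diff] unfolding ye .
  have d1': "((\<lambda>t. \<phi> (t *\<^sub>R e + c)) has_real_derivative
      frechet_derivative \<phi> (at (vector [r, 0, y$3])) (axis 1 1)) (at r)"
    by (rule has_field_derivative_transform_within_open[OF d1, where S="{0<..}"]) (use r0 eqG in auto)
  have eq: "frechet_derivative \<phi> (at (vector [r, 0, y$3])) (axis 1 1) = frechet_derivative \<phi> (at y) e"
    using DERIV_unique[OF d1' d2] .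
  also have "\<dots> = e \<bullet> (\<chi> i. frechet_derivative \<phi> (at y) (axis i 1))"
    by (rule frechet_inner[OF diff])
  finally have "\<bar>frechet_derivative \<phi> (at (vector [r, 0, y$3])) (axis 1 1)\<bar>
      = \<bar>e \<bullet> (\<chi> i. frechet_derivative \<phi> (at y) (axis i 1))\<bar>" by simp
  also have "\<dots> \<le> norm e * norm (\<chi> i. frechet_derivative \<phi> (at y) (axis i 1))"
    by (rule Cauchy_Schwarz_ineq2)
  finally show ?thesis using ne by (simp add: r_def)
qed

lemma nn_integral_cmult_le_any:
  "c * integral\<^sup>N M f \<le> (\<integral>\<^sup>+x. c * f x \<partial>M)"
  unfolding nn_integral_def SUP_mult_left_ennreal
proof (rule SUP_least)
  fix g assume g: "g \<in> {g. simple_function M g \<and> g \<le> f}"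
  then have "c * integral\<^sup>S M g = integral\<^sup>S M (\<lambda>x. c * g x)" by simp
  also have "\<dots> \<le> (SUP g \<in> {g. simple_function M g \<and> g \<le> (\<lambda>x. c * f x)}. integral\<^sup>S M g)"
  proof (rule SUP_upper)
    show "(\<lambda>x. c * g x) \<in> {g. simple_function M g \<and> g \<le> (\<lambda>x. c * f x)}"
      using g by (auto simp: le_fun_def intro: mult_left_mono)
  qed
  finally show "c * integral\<^sup>S M g \<le> (SUP g \<in> {g. simple_function M g \<and> g \<le> (\<lambda>x. c * f x)}. integral\<^sup>S M g)" .
qed

lemma nn_integral_cmult_real:
  assumes "0 < r"
  shows "(\<integral>\<^sup>+x. ennreal r * f x \<partial>M) = ennreal r * integral\<^sup>N M f"
proof (rule antisym)
  have inv: "ennreal (1/r) * ennreal r = 1" using assms by (simp add: ennreal_mult[symmetric])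
  have "ennreal (1/r) * (\<integral>\<^sup>+x. ennreal r * f x \<partial>M) \<le> (\<integral>\<^sup>+x. ennreal (1/r) * (ennreal r * f x) \<partial>M)"
    by (rule nn_integral_cmult_le_any)
  also have "\<dots> = integral\<^sup>N M f" by (simp add: mult.assoc[symmetric] inv)
  finally have "ennreal r * (ennreal (1/r) * (\<integral>\<^sup>+x. ennreal r * f x \<partial>M)) \<le> ennreal r * integral\<^sup>N M f"
    by (rule mult_left_mono) simp
  then show "(\<integral>\<^sup>+x. ennreal r * f x \<partial>M) \<le> ennreal r * integral\<^sup>N M f"
    by (simp add: mult.assoc[symmetric] inv mult.commute[of "ennreal r"])
qed (rule nn_integral_cmult_le_any)

lemma weight_bound:
  fixes r L L0 C m V :: real
  assumes r: "0 < r" and L: "L0 \<le> L" and L0: "1 \<le> L0" and C: "0 < C" and m: "0 < m"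
    and V: "\<bar>V\<bar> \<le> C / (r * L powr (2 + 2*m))"
  shows "\<bar>V\<bar> / r + V^2 \<le> (C + C^2) * L0 powr (-m) * (L powr (-(2+m)) / r) / r"
proof -
  define P where "P = L powr (2 + 2*m)"
  have L1: "1 \<le> L" using L L0 by simp
  have P1: "1 \<le> P" unfolding P_def using L1 m by (simp add: ge_one_powr_ge_zero)
  have P0: "0 < P" using P1 by simp
  have B0: "0 \<le> C / (r * P)" using C r P0 by simp
  have h1: "\<bar>V\<bar> / r \<le> C / (r * P) / r" using V r unfolding P_def by (intro divide_right_mono) auto
  have "V^2 = \<bar>V\<bar>^2" by simp
  also have "\<dots> \<le> (C / (r * P))^2" by (rule power_mono) (use V in \<open>auto simp: P_def\<close>)
  also have "\<dots> = C^2 / (r * P) / (r * P)" by (simp add: power2_eq_square)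
  also have "\<dots> \<le> C^2 / (r * P) / r"
  proof -
    have "r \<le> r * P" using r P1 by simp
    then show ?thesis using r P0 C by (intro divide_left_mono) auto
  qed
  finally have h2: "V^2 \<le> C^2 / (r * P) / r" .
  have "\<bar>V\<bar> / r + V^2 \<le> C / (r * P) / r + C^2 / (r * P) / r"
    using h1 h2 by linarith
  also have "\<dots> = (C + C^2) * (1/P) / r / r"
    using r P0 by (simp add: field_simps)
  also have "1/P = L powr (-m) * L powr (-(2+m))"
  proof -
    have "1/P = L powr (-(2+2*m))" unfolding P_def by (rule powr_minus_divide[symmetric])
    also have "\<dots> = L powr (-m) * L powr (-(2+m))" unfolding powr_add[symmetric]
      by (rule arg_cong[where f="\<lambda>e. L powr e"]) simp
    finally show ?thesis .
  qed
  also have "L powr (-m) \<le> L0 powr (-m)"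
    using L L0 m by (intro powr_mono2') auto
  then have "(C + C^2) * (L powr (-m) * L powr (-(2+m))) / r / r \<le> (C + C^2) * (L0 powr (-m) * L powr (-(2+m))) / r / r"
    using C r by (intro divide_right_mono mult_left_mono mult_right_mono) auto
  finally show ?thesis by (simp add: mult.assoc)
qed

lemma V3_cont: "continuous_on UNIV (\<lambda>p::real\<times>real. (vector [fst p, 0, snd p] :: real^3))"
proof -
  have eq: "(\<lambda>p::real\<times>real. (vector [fst p, 0, snd p] :: real^3)) = (\<lambda>p. (\<chi> i. if i = 1 then fst p else if i = 2 then 0 else snd p))"
    by (auto simp: fun_eq_iff vec_eq_iff forall_3 vector_3)
  show ?thesis unfolding eq
  proof (rule continuous_on_vec_lambda)
    fix i :: 3
    show "continuous_on UNIV (\<lambda>p::real\<times>real. if i = 1 then fst p else if i = 2 then 0 else snd p)"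
      by (cases "i = 1"; cases "i = 2") (auto intro!: continuous_intros)
  qed
qed

lemma rad_nonneg: "0 \<le> rad y" by (simp add: rad_def)

lemma rad_meas[measurable]: "rad \<in> borel_measurable borel"
  using rad_cont by (rule borel_measurable_continuous_onI)

lemma radial3':
  fixes F :: "real \<Rightarrow> real \<Rightarrow> ennreal"
  assumes Fm: "(\<lambda>p. F (fst p) (snd p)) \<in> borel_measurable (borel \<Otimes>\<^sub>M borel)"
  shows "(\<integral>\<^sup>+y. F (rad y) (y$3) \<partial>lborel) = (\<integral>\<^sup>+z. (\<integral>\<^sup>+\<rho>. ennreal (2*pi*\<rho>) * F \<rho> z \<partial>lborel) \<partial>lborel)"
  by (rule radial3) (use Fm in \<open>simp add: borel_prod\<close>)

lemma AE_rad_ne0: "AE y in lborel. rad (y::real^3) \<noteq> 0"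
proof -
  have eq1: "(\<integral>\<^sup>+y. indicator {0} (rad y) \<partial>lborel) = (\<integral>\<^sup>+z. (\<integral>\<^sup>+\<rho>. ennreal (2*pi*\<rho>) * indicator {0::real} \<rho> \<partial>lborel) \<partial>lborel)"
  proof -
    have m: "(\<lambda>p. indicator {0::real} (fst p) :: ennreal) \<in> borel_measurable (borel \<Otimes>\<^sub>M borel)" by measurable
    show ?thesis using radial3'[of "\<lambda>\<rho> z. indicator {0::real} \<rho>", OF m] by simp
  qed
  have eq2: "(\<integral>\<^sup>+z. (\<integral>\<^sup>+\<rho>. ennreal (2*pi*\<rho>) * indicator {0::real} \<rho> \<partial>lborel) \<partial>lborel) = (0::ennreal)"
  proof -
    have "\<And>\<rho>::real. ennreal (2*pi*\<rho>) * indicator {0::real} \<rho> = 0" by (case_tac "\<rho> = 0") (auto simp: indicator_def)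
    then show ?thesis by simp
  qed
  from eq1 eq2 have "(\<integral>\<^sup>+y. indicator {0} (rad y) \<partial>lborel) = 0" by simp
  then have "AE y in lborel. (indicator {0} (rad y) :: ennreal) = 0"
  proof -
    have "(\<lambda>y. indicator {0} (rad y) :: ennreal) \<in> borel_measurable lborel" by measurable
    from nn_integral_0_iff_AE[OF this] show ?thesis using \<open>(\<integral>\<^sup>+y. indicator {0} (rad y) \<partial>lborel) = 0\<close> by simp
  qed
  then show ?thesis by eventually_elim (auto simp: indicator_def)
qed

lemma spatial:
  fixes \<phi> :: "real^3 \<Rightarrow> real" and v :: "real \<Rightarrow> real \<Rightarrow> real" and C \<epsilon> a L0 lam1 :: real
  assumes diff: "\<And>y. \<phi> differentiable (at y)"
    and gcont: "\<And>i. continuous_on UNIV (\<lambda>y. frechet_derivative \<phi> (at y) (axis i 1))"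
    and axi: "\<And>y z. rad y = rad z \<Longrightarrow> y$3 = z$3 \<Longrightarrow> \<phi> y = \<phi> z"
    and supp: "\<And>y. a \<le> rad y \<Longrightarrow> \<phi> y = 0"
    and vb: "\<And>r x3. 0 < r \<Longrightarrow> r < 1/2 \<Longrightarrow> \<bar>v r x3\<bar> \<le> C / (r * \<bar>ln r\<bar> powr (2 + \<epsilon>))"
    and C: "0 < C" and eps: "0 < \<epsilon>" and a0: "0 < a" and a1: "a < 1/2"
    and L0: "-ln a = L0" "1 \<le> L0"
    and lam: "4 * (C + C^2) * L0 powr (-\<epsilon>) \<le> lam1"
  shows "(\<integral>\<^sup>+y. ennreal ((\<bar>v (rad y) (y$3)\<bar> / rad y + (v (rad y) (y$3))^2) * (\<phi> y)^2) \<partial>lborel)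
         \<le> ennreal lam1 * (\<integral>\<^sup>+y. ennreal ((norm (\<chi> i. frechet_derivative \<phi> (at y) (axis i 1)))^2) \<partial>lborel)"
proof -
  define m where "m = \<epsilon>/2"
  have m0: "0 < m" using eps by (simp add: m_def)
  have epsm: "\<epsilon> = 2*m" by (simp add: m_def)
  define K0 where "K0 = (C + C^2) * L0 powr (-m)"
  have K0: "0 < K0" using C L0 by (simp add: K0_def add_pos_pos)
  define G where "G = (\<lambda>\<rho> z. \<phi> (vector [\<rho>, 0, z] :: real^3))"
  define Gr where "Gr = (\<lambda>\<rho> z. frechet_derivative \<phi> (at (vector [\<rho>, 0, z] :: real^3)) (axis 1 1))"
  define gr where "gr = (\<lambda>y. (\<chi> i. frechet_derivative \<phi> (at y) (axis i 1)) :: real^3)"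
  have phic: "continuous_on UNIV \<phi>"
    by (intro differentiable_imp_continuous_on) (auto simp: differentiable_on_def intro: differentiable_at_withinI diff)
  have Gc: "continuous_on UNIV (\<lambda>p::real\<times>real. G (fst p) (snd p))"
    unfolding G_def by (rule continuous_on_compose2[OF phic V3_cont]) auto
  have Grc2: "continuous_on UNIV (\<lambda>p::real\<times>real. Gr (fst p) (snd p))"
    unfolding Gr_def by (rule continuous_on_compose2[OF gcont V3_cont]) auto
  have Gm[measurable]: "(\<lambda>p. G (fst p) (snd p)) \<in> borel_measurable (borel \<Otimes>\<^sub>M borel)"
    using borel_measurable_continuous_onI[OF Gc] by (simp add: borel_prod)
  have Grm[measurable]: "(\<lambda>p. Gr (fst p) (snd p)) \<in> borel_measurable (borel \<Otimes>\<^sub>M borel)"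
    using borel_measurable_continuous_onI[OF Grc2] by (simp add: borel_prod)
  have Ga: "G a z = 0" for z unfolding G_def by (rule supp) (use a0 in \<open>simp add: rad_vec3\<close>)
  have Gphi: "\<phi> y = G (rad y) (y$3)" for y
    unfolding G_def by (rule axi) (simp_all add: rad_vec3 vector_3 rad_nonneg)
  have Gder: "((\<lambda>\<rho>. G \<rho> z) has_real_derivative Gr \<rho> z) (at \<rho>)" for \<rho> z
    using line_deriv[where t=\<rho> and e="axis 1 1" and c="vector [0,0,z]", OF diff]
    unfolding vec3_line G_def Gr_def .
  have Grc: "continuous_on {0..a} (\<lambda>\<rho>. Gr \<rho> z)" for z
  proof -
    have "continuous_on UNIV (\<lambda>\<rho>::real. (\<rho>, z))" by (intro continuous_intros)
    from continuous_on_compose2[OF Grc2 this] have "continuous_on UNIV (\<lambda>\<rho>. Gr \<rho> z)" by simp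
    then show ?thesis by (rule continuous_on_subset) auto
  qed
  define F1 where "F1 = (\<lambda>\<rho> z. ennreal (K0 * ((G \<rho> z)^2 * ((-ln \<rho>) powr (-(2+m)) / \<rho>) / \<rho>)) * indicator {0<..<a} \<rho>)"
  have F1m: "(\<lambda>p. F1 (fst p) (snd p)) \<in> borel_measurable (borel \<Otimes>\<^sub>M borel)"
    unfolding F1_def by measurable
  have step1: "(\<integral>\<^sup>+y. ennreal ((\<bar>v (rad y) (y$3)\<bar> / rad y + (v (rad y) (y$3))^2) * (\<phi> y)^2) \<partial>lborel)
      \<le> (\<integral>\<^sup>+y. F1 (rad y) (y$3) \<partial>lborel)"
  proof (rule nn_integral_mono_AE)
    show "AE y in lborel. ennreal ((\<bar>v (rad y) (y$3)\<bar> / rad y + (v (rad y) (y$3))^2) * (\<phi> y)^2) \<le> F1 (rad y) (y$3)"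
      using AE_rad_ne0
    proof eventually_elim
      case (elim y)
      define r where "r = rad y"
      have r0: "0 < r" using elim rad_nonneg[of y] by (simp add: r_def)
      show ?case
      proof (cases "a \<le> r")
        case True
        then have "\<phi> y = 0" using supp by (simp add: r_def)
        then show ?thesis by simp
      next
        case False
        then have ra: "r < a" by simp
        define L where "L = - ln r"
        have lnr: "ln r < ln a" using r0 ra by simp
        have LL0: "L0 \<le> L" using lnr L0 by (simp add: L_def)
        have absln: "\<bar>ln r\<bar> = L" using r0 ra a1 by (simp add: L_def)
        have V: "\<bar>v r (y$3)\<bar> \<le> C / (r * L powr (2 + 2*m))"
          using vb[of r "y$3"] r0 ra a1 by (simp add: absln epsm)
        have wb: "\<bar>v r (y$3)\<bar> / r + (v r (y$3))^2 \<le> (C + C^2) * L0 powr (-m) * (L powr (-(2+m)) / r) / r"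
          by (rule weight_bound[OF r0 LL0 L0(2) C m0 V])
        have "(\<bar>v r (y$3)\<bar> / r + (v r (y$3))^2) * (G r (y$3))^2
            \<le> ((C + C^2) * L0 powr (-m) * (L powr (-(2+m)) / r) / r) * (G r (y$3))^2"
          using wb by (rule mult_right_mono) simp
        also have "\<dots> = K0 * ((G r (y$3))^2 * ((-ln r) powr (-(2+m)) / r) / r)"
          by (simp add: K0_def L_def)
        finally have "ennreal ((\<bar>v r (y$3)\<bar> / r + (v r (y$3))^2) * (G r (y$3))^2)
            \<le> ennreal (K0 * ((G r (y$3))^2 * ((-ln r) powr (-(2+m)) / r) / r))"
          by (rule ennreal_leI)
        then show ?thesis using r0 ra unfolding F1_def Gphi[of y] by (simp add: r_def)
      qed
    qed
  qed
  have step2: "(\<integral>\<^sup>+y. F1 (rad y) (y$3) \<partial>lborel) = (\<integral>\<^sup>+z. (\<integral>\<^sup>+\<rho>. ennreal (2*pi*\<rho>) * F1 \<rho> z \<partial>lborel) \<partial>lborel)"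
    by (rule radial3'[OF F1m])
  define c where "c = 4 * K0 * L0 powr (-m)"
  have c0: "0 < c" using K0 L0 by (simp add: c_def)
  define Y where "Y = (\<lambda>z. \<integral>\<^sup>+\<rho>. ennreal (2*pi*\<rho>) * ennreal ((Gr \<rho> z)^2) \<partial>lborel)"
  have step3: "(\<integral>\<^sup>+\<rho>. ennreal (2*pi*\<rho>) * F1 \<rho> z \<partial>lborel) \<le> ennreal c * Y z" for z
  proof -
    define K where "K = (\<lambda>\<rho>. (G \<rho> z)^2 * (-ln \<rho>) powr (-(2+m)) / \<rho>)"
    have s1: "(\<integral>\<^sup>+\<rho>. ennreal (2*pi*\<rho>) * F1 \<rho> z \<partial>lborel)
        \<le> (\<integral>\<^sup>+\<rho>. ennreal (2*pi*K0) * (ennreal (K \<rho>) * indicator {0..a} \<rho>) \<partial>lborel)"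
    proof (rule nn_integral_mono)
      fix \<rho> :: real
      show "ennreal (2*pi*\<rho>) * F1 \<rho> z \<le> ennreal (2*pi*K0) * (ennreal (K \<rho>) * indicator {0..a} \<rho>)"
      proof (cases "\<rho> \<in> {0<..<a}")
        case True
        then have r0: "0 < \<rho>" and ra: "\<rho> < a" by auto
        have X0: "0 \<le> K0 * ((G \<rho> z)^2 * ((-ln \<rho>) powr (-(2+m)) / \<rho>) / \<rho>)"
          using K0 r0 by simp
        have K0': "0 \<le> K \<rho>" using r0 by (simp add: K_def)
        have f1: "F1 \<rho> z = ennreal (K0 * ((G \<rho> z)^2 * ((-ln \<rho>) powr (-(2+m)) / \<rho>) / \<rho>))"
          using True by (simp add: F1_def)
        have "ennreal (2*pi*\<rho>) * F1 \<rho> z = ennreal (2*pi*\<rho> * (K0 * ((G \<rho> z)^2 * ((-ln \<rho>) powr (-(2+m)) / \<rho>) / \<rho>)))"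
          unfolding f1 by (rule ennreal_mult'[symmetric]) (use r0 in simp)
        also have "2*pi*\<rho> * (K0 * ((G \<rho> z)^2 * ((-ln \<rho>) powr (-(2+m)) / \<rho>) / \<rho>)) = 2*pi*K0 * K \<rho>"
          using r0 by (simp add: K_def field_simps)
        also have "ennreal (2*pi*K0 * K \<rho>) = ennreal (2*pi*K0) * ennreal (K \<rho>)"
          by (rule ennreal_mult') (use K0 in simp)
        also have "\<dots> = ennreal (2*pi*K0) * (ennreal (K \<rho>) * indicator {0..a} \<rho>)"
          using r0 ra by simp
        finally show ?thesis by simp
      next
        case False
        then show ?thesis by (simp add: F1_def)
      qed
    qed
    also have "\<dots> = ennreal (2*pi*K0) * (\<integral>\<^sup>+\<rho>. ennreal (K \<rho>) * indicator {0..a} \<rho> \<partial>lborel)"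
      by (rule nn_integral_cmult_real) (use K0 in simp)
    also have "\<dots> \<le> ennreal (2*pi*K0) * (4 * (\<integral>\<^sup>+\<rho>. ennreal ((Gr \<rho> z)^2 * \<rho> * (-ln \<rho>) powr (-m)) * indicator {0..a} \<rho> \<partial>lborel))"
    proof (rule mult_left_mono)
      show "(\<integral>\<^sup>+\<rho>. ennreal (K \<rho>) * indicator {0..a} \<rho> \<partial>lborel)
          \<le> 4 * (\<integral>\<^sup>+\<rho>. ennreal ((Gr \<rho> z)^2 * \<rho> * (-ln \<rho>) powr (-m)) * indicator {0..a} \<rho> \<partial>lborel)"
        unfolding K_def
        by (rule hardy1d[of a m "\<lambda>\<rho>. G \<rho> z" "\<lambda>\<rho>. Gr \<rho> z"]) (use a0 a1 m0 Gder Grc Ga in auto)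
    qed simp
    also have "(\<integral>\<^sup>+\<rho>. ennreal ((Gr \<rho> z)^2 * \<rho> * (-ln \<rho>) powr (-m)) * indicator {0..a} \<rho> \<partial>lborel)
        \<le> (\<integral>\<^sup>+\<rho>. ennreal (L0 powr (-m) / (2*pi)) * (ennreal (2*pi*\<rho>) * ennreal ((Gr \<rho> z)^2)) \<partial>lborel)"
    proof (rule nn_integral_mono)
      fix \<rho> :: real
      show "ennreal ((Gr \<rho> z)^2 * \<rho> * (-ln \<rho>) powr (-m)) * indicator {0..a} \<rho>
          \<le> ennreal (L0 powr (-m) / (2*pi)) * (ennreal (2*pi*\<rho>) * ennreal ((Gr \<rho> z)^2))"
      proof (cases "\<rho> \<in> {0<..a}")
        case True
        then have r0: "0 < \<rho>" and ra: "\<rho> \<le> a" by auto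
        have lnr: "ln \<rho> \<le> ln a" using r0 ra by simp
        have LL0: "L0 \<le> -ln \<rho>" using lnr L0 by simp
        have pw: "(-ln \<rho>) powr (-m) \<le> L0 powr (-m)"
          using LL0 L0 m0 by (intro powr_mono2') auto
        have "(Gr \<rho> z)^2 * \<rho> * (-ln \<rho>) powr (-m) \<le> (Gr \<rho> z)^2 * \<rho> * L0 powr (-m)"
          using pw r0 by (intro mult_left_mono) auto
        also have "\<dots> = L0 powr (-m) / (2*pi) * (2*pi*\<rho> * (Gr \<rho> z)^2)" by (simp add: field_simps)
        finally have "ennreal ((Gr \<rho> z)^2 * \<rho> * (-ln \<rho>) powr (-m)) \<le> ennreal (L0 powr (-m) / (2*pi) * (2*pi*\<rho> * (Gr \<rho> z)^2))"
          by (rule ennreal_leI)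
        also have "\<dots> = ennreal (L0 powr (-m) / (2*pi)) * ennreal (2*pi*\<rho> * (Gr \<rho> z)^2)"
          by (rule ennreal_mult') simp
        also have "ennreal (2*pi*\<rho> * (Gr \<rho> z)^2) = ennreal (2*pi*\<rho>) * ennreal ((Gr \<rho> z)^2)"
          by (rule ennreal_mult') (use r0 in simp)
        finally show ?thesis using True by simp
      next
        case False
        then have "\<rho> \<le> 0 \<or> a < \<rho>" by auto
        then show ?thesis
        proof
          assume "\<rho> \<le> 0"
          then have "ennreal ((Gr \<rho> z)^2 * \<rho> * (-ln \<rho>) powr (-m)) = 0"
          proof (intro ennreal_neg)
            have "(Gr \<rho> z)^2 * \<rho> \<le> 0" using \<open>\<rho> \<le> 0\<close> by (simp add: mult_nonneg_nonpos)
            then show "(Gr \<rho> z)^2 * \<rho> * (-ln \<rho>) powr (-m) \<le> 0" by (simp add: mult_nonpos_nonneg)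
          qed
          then show ?thesis by simp
        qed simp
      qed
    qed
    also have "\<dots> = ennreal (L0 powr (-m) / (2*pi)) * Y z"
      unfolding Y_def by (rule nn_integral_cmult_real) (use L0 in simp)
    finally have "(\<integral>\<^sup>+\<rho>. ennreal (2*pi*\<rho>) * F1 \<rho> z \<partial>lborel)
        \<le> ennreal (2*pi*K0) * (4 * (ennreal (L0 powr (-m) / (2*pi)) * Y z))"
      by (simp add: mult_left_mono)
    also have "\<dots> = ennreal (2*pi*K0 * 4 * (L0 powr (-m) / (2*pi))) * Y z"
    proof -
      define A where "A = L0 powr (-m) / (2*pi)"
      define B where "B = 2*pi*K0"
      have B0: "0 \<le> B" using K0 by (simp add: B_def)
      have "ennreal (B * 4 * A) = ennreal (B * 4) * ennreal A" by (rule ennreal_mult') (use B0 in simp)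
      also have "ennreal (B * 4) = ennreal B * ennreal 4" by (rule ennreal_mult') (use B0 in simp)
      finally have "ennreal (B * 4 * A) = ennreal B * 4 * ennreal A" by simp
      then have "ennreal B * (4 * (ennreal A * Y z)) = ennreal (B * 4 * A) * Y z"
        by (simp only: mult.assoc)
      then show ?thesis by (simp only: A_def B_def)
    qed
    also have "2*pi*K0 * 4 * (L0 powr (-m) / (2*pi)) = c"
      by (simp add: c_def field_simps)
    finally show ?thesis .
  qed
  have Ym: "(\<lambda>p. ennreal ((Gr (fst p) (snd p))^2)) \<in> borel_measurable (borel \<Otimes>\<^sub>M borel)"
    by measurable
  have "(\<integral>\<^sup>+z. (\<integral>\<^sup>+\<rho>. ennreal (2*pi*\<rho>) * F1 \<rho> z \<partial>lborel) \<partial>lborel) \<le> (\<integral>\<^sup>+z. ennreal c * Y z \<partial>lborel)"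
    by (rule nn_integral_mono) (rule step3)
  also have "\<dots> = ennreal c * (\<integral>\<^sup>+z. Y z \<partial>lborel)"
    by (rule nn_integral_cmult_real[OF c0])
  also have "(\<integral>\<^sup>+z. Y z \<partial>lborel) = (\<integral>\<^sup>+y. ennreal ((Gr (rad y) (y$3))^2) \<partial>lborel)"
    unfolding Y_def using radial3'[of "\<lambda>\<rho> z. ennreal ((Gr \<rho> z)^2)", OF Ym] by simp
  also have "(\<integral>\<^sup>+y. ennreal ((Gr (rad y) (y$3))^2) \<partial>lborel) \<le> (\<integral>\<^sup>+y. ennreal ((norm (gr y))^2) \<partial>lborel)"
  proof (rule nn_integral_mono_AE)
    show "AE y in lborel. ennreal ((Gr (rad y) (y$3))^2) \<le> ennreal ((norm (gr y))^2)"
      using AE_rad_ne0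
    proof eventually_elim
      case (elim y)
      have "0 < rad y" using elim rad_nonneg[of y] by simp
      from radial_deriv_bound[OF diff axi this]
      have "\<bar>Gr (rad y) (y$3)\<bar> \<le> norm (gr y)" by (simp add: Gr_def gr_def)
      then have "\<bar>Gr (rad y) (y$3)\<bar>^2 \<le> (norm (gr y))^2" by (rule power_mono) simp
      then show ?case by (intro ennreal_leI) simp
    qed
  qed
  finally have main: "(\<integral>\<^sup>+z. (\<integral>\<^sup>+\<rho>. ennreal (2*pi*\<rho>) * F1 \<rho> z \<partial>lborel) \<partial>lborel)
      \<le> ennreal c * (\<integral>\<^sup>+y. ennreal ((norm (gr y))^2) \<partial>lborel)"
    by (simp add: mult_left_mono)
  have "c = 4 * (C + C^2) * L0 powr (-\<epsilon>)"
  proof -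
    have "L0 powr (-m) * L0 powr (-m) = L0 powr (-\<epsilon>)"
      unfolding powr_add[symmetric] epsm by (rule arg_cong[where f="\<lambda>e. L0 powr e"]) simp
    then show ?thesis by (simp add: c_def K0_def mult.assoc[symmetric])
  qed
  then have "ennreal c \<le> ennreal lam1" using lam by (simp add: ennreal_leI)
  then have fin: "ennreal c * (\<integral>\<^sup>+y. ennreal ((norm (gr y))^2) \<partial>lborel) \<le> ennreal lam1 * (\<integral>\<^sup>+y. ennreal ((norm (gr y))^2) \<partial>lborel)"
    by (rule mult_right_mono) simp
  have "(\<integral>\<^sup>+y. ennreal ((\<bar>v (rad y) (y$3)\<bar> / rad y + (v (rad y) (y$3))^2) * (\<phi> y)^2) \<partial>lborel)
      \<le> ennreal c * (\<integral>\<^sup>+y. ennreal ((norm (gr y))^2) \<partial>lborel)"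
    using step1 main unfolding step2 by (rule order_trans)
  from order_trans[OF this fin] show ?thesis unfolding gr_def .
qed

lemma slice_deriv:
  fixes \<Psi> :: "(real^3) \<times> real \<Rightarrow> real"
  assumes d: "\<Psi> differentiable_on UNIV"
  shows "((\<lambda>z. \<Psi> (z,s)) has_derivative (\<lambda>h. frechet_derivative \<Psi> (at (y,s)) (h,0))) (at y)"
proof -
  have "\<Psi> differentiable (at (y,s))" using d by (simp add: differentiable_on_def)
  then have D: "(\<Psi> has_derivative frechet_derivative \<Psi> (at (y,s))) (at (y,s))"
    using frechet_derivative_works by blast
  have P: "((\<lambda>z. (z,s)) has_derivative (\<lambda>h. (h,0))) (at y)"
    by (auto intro!: derivative_eq_intros)
  have "((\<Psi> \<circ> (\<lambda>z. (z,s))) has_derivative (frechet_derivative \<Psi> (at (y,s)) \<circ> (\<lambda>h. (h,0)))) (at y)"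
    by (rule diff_chain_at[OF P]) (use D in simp)
  then show ?thesis by (simp add: comp_def)
qed

lemma slice_facts:
  fixes \<Psi> :: "(real^3) \<times> real \<Rightarrow> real"
  assumes d: "\<Psi> differentiable_on UNIV"
    and c: "\<forall>i\<in>Basis. continuous_on UNIV (\<lambda>x. frechet_derivative \<Psi> (at x) i)"
  shows "\<And>y. (\<lambda>z. \<Psi> (z,s)) differentiable (at y)"
    and "\<And>y h. frechet_derivative (\<lambda>z. \<Psi> (z,s)) (at y) h = frechet_derivative \<Psi> (at (y,s)) (h,0)"
    and "\<And>i. continuous_on UNIV (\<lambda>y. frechet_derivative (\<lambda>z. \<Psi> (z,s)) (at y) (axis i 1))"
proof -
  fix y show "(\<lambda>z. \<Psi> (z,s)) differentiable (at y)"
    using slice_deriv[OF d] by (auto simp: differentiable_def)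
next
  fix y h show "frechet_derivative (\<lambda>z. \<Psi> (z,s)) (at y) h = frechet_derivative \<Psi> (at (y,s)) (h,0)"
    using frechet_derivative_at[OF slice_deriv[OF d, of s y]] by metis
next
  fix i :: 3
  have eq: "(\<lambda>y. frechet_derivative (\<lambda>z. \<Psi> (z,s)) (at y) (axis i 1)) = (\<lambda>y. frechet_derivative \<Psi> (at (y,s)) (axis i 1, 0))"
    using frechet_derivative_at[OF slice_deriv[OF d, of s]] by metis
  have B: "(axis i 1, 0) \<in> (Basis :: ((real^3) \<times> real) set)"
    by (auto simp: Basis_prod_def)
  have "continuous_on UNIV (\<lambda>y::real^3. (y, s))" by (intro continuous_intros)
  from continuous_on_compose2[OF c[rule_format, OF B] this]
  show "continuous_on UNIV (\<lambda>y. frechet_derivative (\<lambda>z. \<Psi> (z,s)) (at y) (axis i 1))"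
    unfolding eq by simp
qed

theorem mainTheorem2:
  fixes vth :: "real \<Rightarrow> real \<Rightarrow> real \<Rightarrow> real" and C \<epsilon> :: real
  assumes "C > 0" and "\<epsilon> > 0"
    and "\<And>r x3 t. t \<ge> 0 \<Longrightarrow> 0 < r \<Longrightarrow> r < 1/2 \<Longrightarrow>
           \<bar>vth r x3 t\<bar> \<le> C / (r * \<bar>ln r\<bar> powr (2 + \<epsilon>))"
  shows "\<forall>lam1>0. critical_class lam1 vth"
proof (intro allI impI)
  fix lam1 :: real assume lam1: "lam1 > 0"
  note C = assms(1) and eps = assms(2) and vb = assms(3)
  define B where "B = 4 * (C + C^2) / lam1"
  have B0: "0 < B" using C lam1 by (simp add: B_def add_pos_pos)
  define L0 where "L0 = max 1 (B powr (1/\<epsilon>)) + 1"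
  have L0ge: "2 \<le> L0" by (simp add: L0_def)
  define a where "a = exp (-L0)"
  have a0: "0 < a" by (simp add: a_def)
  have lna: "-ln a = L0" by (simp add: a_def)
  have a12: "a < 1/2"
  proof -
    have "1 + L0 \<le> exp L0" by (rule exp_ge_add_one_self)
    then have "3 \<le> exp L0" using L0ge by linarith
    then have "1 / exp L0 \<le> 1/3" by (simp add: divide_simps)
    then show ?thesis by (simp add: a_def exp_minus field_simps)
  qed
  have lamc: "4 * (C + C^2) * L0 powr (-\<epsilon>) \<le> lam1"
  proof -
    have "B = (B powr (1/\<epsilon>)) powr \<epsilon>"
      using B0 eps by (simp add: powr_powr)
    also have "\<dots> \<le> L0 powr \<epsilon>"
      by (rule powr_mono2) (use eps in \<open>auto simp: L0_def\<close>)
    finally have BL: "B \<le> L0 powr \<epsilon>" .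
    have L0p: "0 < L0 powr \<epsilon>" using L0ge by simp
    have "4 * (C + C^2) * L0 powr (-\<epsilon>) = 4 * (C + C^2) / L0 powr \<epsilon>"
      by (simp add: powr_minus_divide)
    also have "\<dots> \<le> 4 * (C + C^2) / B"
      using BL B0 C by (intro divide_left_mono) (auto simp: add_pos_pos intro!: mult_pos_pos)
    also have "\<dots> = lam1"
    proof -
      have "0 < C^2" using C by simp
      then have "0 < C + C^2" using C by linarith
      then have "4 * (C + C^2) \<noteq> 0" by auto
      then show ?thesis using lam1 by (simp add: B_def)
    qed
    finally show ?thesis .
  qed
  show "critical_class lam1 vth"
    unfolding critical_class_def
  proof (rule exI[of _ a], rule exI[of _ 1], intro conjI allI impI)
    show "0 < a" by (rule a0)
    show "a < 1" using a12 by simp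
    show "(0::real) < 1" by simp
    fix t :: real and \<psi> :: "real^3 \<Rightarrow> real \<Rightarrow> real"
    assume t: "0 \<le> t" and adm: "admissible a t \<psi>"
    define \<Psi> where "\<Psi> = (\<lambda>p::(real^3)\<times>real. \<psi> (fst p) (snd p))"
    have sm: "smooth_fun \<Psi>" and ax: "axisym \<psi>"
      and sup: "\<exists>l\<ge>a. \<forall>s\<in>{0..t}. closure {y. \<psi> y s \<noteq> 0} \<subseteq> cyl a l"
      using adm by (auto simp: admissible_def \<Psi>_def)
    have "Ck (Suc 0) \<Psi>" using sm by (simp add: smooth_fun_def)
    then have d: "\<Psi> differentiable_on UNIV" and c: "\<forall>i\<in>Basis. continuous_on UNIV (\<lambda>x. frechet_derivative \<Psi> (at x) i)"
      by auto
    obtain l where l: "\<forall>s\<in>{0..t}. closure {y. \<psi> y s \<noteq> 0} \<subseteq> cyl a l" using sup by blast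
    have sl: "(\<lambda>z. \<Psi> (z,s)) = (\<lambda>z. \<psi> z s)" for s by (simp add: \<Psi>_def)
    have sp: "(\<integral>\<^sup>+y. ennreal ((\<bar>vth (rad y) (y$3) s\<bar> / rad y + (vth (rad y) (y$3) s)^2) * (\<psi> y s)^2) \<partial>lborel)
        \<le> ennreal lam1 * (\<integral>\<^sup>+y. ennreal ((norm (grad_y \<psi> y s))^2) \<partial>lborel)"
      if s: "s \<in> {0..t}" for s
    proof -
      have h1: "(\<lambda>z. \<psi> z s) differentiable (at y)" for y
        using slice_facts(1)[OF d c, of s y] unfolding sl .
      have h2: "continuous_on UNIV (\<lambda>y. frechet_derivative (\<lambda>z. \<psi> z s) (at y) (axis i 1))" for i
        using slice_facts(3)[OF d c, of s i] unfolding sl .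
      have h3: "\<psi> y s = \<psi> z s" if "rad y = rad z" "y$3 = z$3" for y z
        using ax that unfolding axisym_def by blast
      have h4: "\<psi> y s = 0" if "a \<le> rad y" for y
      proof (rule ccontr)
        assume "\<psi> y s \<noteq> 0"
        then have "y \<in> closure {y. \<psi> y s \<noteq> 0}" by (auto intro: closure_subset[THEN subsetD])
        then have "y \<in> cyl a l" using l s by blast
        then show False using that by (simp add: cyl_def)
      qed
      have h5: "\<bar>vth r x3 s\<bar> \<le> C / (r * \<bar>ln r\<bar> powr (2 + \<epsilon>))" if "0 < r" "r < 1/2" for r x3
        using vb[of s r x3] that s by simp
      have L1: "1 \<le> L0" using L0ge by simp
      note sp0 = spatial[where \<phi>="\<lambda>z. \<psi> z s" and v="\<lambda>r x3. vth r x3 s" and C=C and \<epsilon>=\<epsilon> and a=a and ?L0.0=L0 and ?lam1.0=lam1,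
          OF h1 h2 h3 h4 h5 C eps a0 a12 lna L1 lamc]
      show ?thesis using sp0 by (simp add: grad_y_def)
    qed
    have "(\<integral>\<^sup>+s\<in>{0..t}. (\<integral>\<^sup>+y. ennreal ((\<bar>vth (rad y) (y$3) s\<bar> / rad y + (vth (rad y) (y$3) s)^2) * (\<psi> y s)^2) \<partial>lborel) \<partial>lborel)
        \<le> (\<integral>\<^sup>+s. ennreal lam1 * ((\<integral>\<^sup>+y. ennreal ((norm (grad_y \<psi> y s))^2) \<partial>lborel) * indicator {0..t} s) \<partial>lborel)"
    proof (rule nn_integral_mono)
      fix s :: real
      show "(\<integral>\<^sup>+y. ennreal ((\<bar>vth (rad y) (y$3) s\<bar> / rad y + (vth (rad y) (y$3) s)^2) * (\<psi> y s)^2) \<partial>lborel) * indicator {0..t} s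
          \<le> ennreal lam1 * ((\<integral>\<^sup>+y. ennreal ((norm (grad_y \<psi> y s))^2) \<partial>lborel) * indicator {0..t} s)"
        using sp[of s] by (cases "s \<in> {0..t}") auto
    qed
    also have "\<dots> = ennreal lam1 * (\<integral>\<^sup>+s\<in>{0..t}. (\<integral>\<^sup>+y. ennreal ((norm (grad_y \<psi> y s))^2) \<partial>lborel) \<partial>lborel)"
      by (rule nn_integral_cmult_real[OF lam1])
    also have "\<dots> \<le> ennreal lam1 * (\<integral>\<^sup>+s\<in>{0..t}. (\<integral>\<^sup>+y. ennreal ((norm (grad_y \<psi> y s))^2) \<partial>lborel) \<partial>lborel)
        + ennreal (1 / a^2) * (\<integral>\<^sup>+s\<in>{0..t}. (\<integral>\<^sup>+y. ennreal ((\<psi> y s)^2) \<partial>lborel) \<partial>lborel)"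
      by (rule add_increasing2) auto
    finally show "(\<integral>\<^sup>+s\<in>{0..t}. (\<integral>\<^sup>+y. ennreal ((\<bar>vth (rad y) (y$3) s\<bar> / rad y + (vth (rad y) (y$3) s)^2) * (\<psi> y s)^2) \<partial>lborel) \<partial>lborel)
        \<le> ennreal lam1 * (\<integral>\<^sup>+s\<in>{0..t}. (\<integral>\<^sup>+y. ennreal ((norm (grad_y \<psi> y s))^2) \<partial>lborel) \<partial>lborel)
        + ennreal (1 / a^2) * (\<integral>\<^sup>+s\<in>{0..t}. (\<integral>\<^sup>+y. ennreal ((\<psi> y s)^2) \<partial>lborel) \<partial>lborel)" .
  qed
qed

end
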